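(* Let $A>0$, let $\mathcal{S} = \{x\in\mathbb{R}^N : \|x\|_2 > A\}$, and let $\widetilde f:\mathbb{R}^{N\times N}\to\mathbb{R}$ be a random differentiable function with $\mathbb{E}\|\nabla\widetilde f(X)\|_F^2 \le M_2$ for all $X\in\mathcal{O}(N)$. Then for any $v^{(1)},\dots,v^{(L)}\in\mathcal{S}$, $$\mathbb{E}\Big[\sum_{l=1}^L \big\|\nabla_{v^{(l)}} \widetilde f\big(H(v^{(1)})\cdots H(v^{(L)})\big)\big\|_2^2\Big] \le \frac{24}{A^2}\, N(N+2)\, L\, M_2 .$$
   Context: $\mathcal{O}(N)$ is the set of real $N\times N$ orthogonal matrices; $\|\cdot\|_F$ is the Frobenius norm. For nonzero $v\in\mathbb{R}^N$, $H(v)=I-2vv^\top/\|v\|_2^2$. The notation $\nabla_{v^{(l)}} g(H(v^{(1)})\cdots H(v^{(L)}))$ denotes the gradient with respect to $v^{(l)}$ of the composite function $(v^{(1)},\dots,v^{(L)})\mapsto g(H(v^{(1)})\cdots H(v^{(L)}))$. *)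

theory Defs
  imports "HOL-Analysis.Analysis" "HOL-Probability.Probability"
begin

(* Gradient of a real-valued function on a Euclidean space (w.r.t. the standard
   inner product; on real^'n^'n this is the Frobenius inner product). *)
definition grad :: "('a::euclidean_space \<Rightarrow> real) \<Rightarrow> 'a \<Rightarrow> 'a" where
  "grad g x = (SOME D. GDERIV g x :> D)"

definition householder :: "real^'n \<Rightarrow> real^'n^'n" where
  "householder v = mat 1 - (2 / (norm v)^2) *\<^sub>R (\<chi> i j. v$i * v$j)"

definition householder_prod :: "nat \<Rightarrow> (nat \<Rightarrow> real^'n) \<Rightarrow> real^'n^'n" where
  "householder_prod L vs = foldr (\<lambda>l P. householder (vs l) ** P) [1..<L+1] (mat 1)"

definition partial_grad_householder ::
  "(real^'n^'n \<Rightarrow> real) \<Rightarrow> nat \<Rightarrow> (nat \<Rightarrow> real^'n) \<Rightarrow> nat \<Rightarrow> real^'n" where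
  "partial_grad_householder g L vs l = grad (\<lambda>w. g (householder_prod L (vs(l := w)))) (vs l)"

end

theory Submission
  imports Defs
begin


lemma gderiv_exists_linear:
  fixes psi :: "'a::euclidean_space \<Rightarrow> real"
  assumes "linear psi"
  shows "\<exists>D. \<forall>h. psi h = inner h D"
proof -
  let ?D = "\<Sum>b\<in>Basis. psi b *\<^sub>R b"
  have "psi h = inner h ?D" for h
  proof -
    have "psi h = psi (\<Sum>b\<in>Basis. inner h b *\<^sub>R b)" by (simp add: euclidean_representation)
    also have "\<dots> = (\<Sum>b\<in>Basis. inner h b * psi b)"
      using assms by (simp add: linear_sum linear_scale)
    also have "\<dots> = inner h ?D" by (simp add: inner_sum_right mult.commute)
    finally show ?thesis .
  qed
  then show ?thesis by blast
qed

lemma grad_norm_bound: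
  fixes phi :: "'a::euclidean_space \<Rightarrow> real"
  assumes d: "(phi has_derivative psi) (at x)" and K: "\<And>h. \<bar>psi h\<bar> \<le> K * norm h"
  shows "norm (grad phi x) \<le> K"
proof -
  have lin: "linear psi" using d has_derivative_linear by blast
  obtain D where D: "\<And>h. psi h = inner h D" using gderiv_exists_linear[OF lin] by blast
  have ex: "GDERIV phi x :> D"
  proof -
    have "psi = (\<lambda>h. inner h D)" using D by (intro ext) simp
    then show ?thesis using d by (simp add: gderiv_def)
  qed
  then have g: "GDERIV phi x :> grad phi x" unfolding grad_def by (rule someI)
  have eq: "(\<lambda>h. inner h (grad phi x)) = psi"
    using has_derivative_unique[OF g[unfolded gderiv_def] d] .
  let ?G = "grad phi x"
  have "norm ?G ^ 2 = psi ?G" using eq by (metis power2_norm_eq_inner)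
  also have "\<dots> \<le> K * norm ?G" using K[of ?G] by linarith
  finally have "norm ?G * norm ?G \<le> K * norm ?G" by (simp add: power2_eq_square)
  then show ?thesis
  proof (cases "norm ?G = 0")
    case True
    have "\<bar>psi 0\<bar> \<le> K * norm (0::'a)" by (rule K)
    have "0 \<le> K"
    proof (rule ccontr)
      assume "\<not> 0 \<le> K"
      obtain b :: 'a where "b \<in> Basis" using nonempty_Basis by blast
      then have "norm b > 0" by (simp add: nonzero_Basis)
      with \<open>\<not> 0 \<le> K\<close> have "K * norm b < 0" by (simp add: mult_neg_pos)
      with K[of b] show False by linarith
    qed
    then show ?thesis using True by simp
  next
    case False
    then have "norm ?G > 0" by simp
    then show ?thesis using \<open>norm ?G * norm ?G \<le> K * norm ?G\<close> by (simp add: mult_le_cancel_right_pos)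
  qed
qed



definition outer :: "real^'n \<Rightarrow> real^'n \<Rightarrow> real^'n^'n" where
  "outer a b = (\<chi> i j. a$i * b$j)"

lemma inner_outer_self: "inner (outer a b) (outer a b) = inner a a * inner b b"
proof -
  have "inner (outer a b) (outer a b) = (\<Sum>i\<in>UNIV. \<Sum>j\<in>UNIV. (a$i * a$i) * (b$j * b$j))"
    by (simp add: outer_def inner_vec_def algebra_simps)
  also have "\<dots> = inner a a * inner b b"
    by (simp add: inner_vec_def sum_distrib_left sum_distrib_right) (rule sum.swap)
  finally show ?thesis .
qed

lemma norm_outer: "norm (outer a b) = norm a * norm b"
proof -
  have "norm (outer a b) ^ 2 = (norm a * norm b)^2"
    by (simp add: power2_norm_eq_inner inner_outer_self power_mult_distrib)
  then show ?thesis by (simp add: power2_eq_iff_nonneg)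
qed

lemma inner_matmul_left:
  fixes P Y Z :: "real^'n^'n"
  shows "inner (P ** Y) Z = inner Y (transpose P ** Z)"
proof -
  have "inner (P ** Y) Z = (\<Sum>i\<in>UNIV. \<Sum>j\<in>UNIV. \<Sum>k\<in>UNIV. P$i$k * Y$k$j * Z$i$j)"
    by (simp add: inner_vec_def matrix_matrix_mult_def sum_distrib_right)
  also have "\<dots> = (\<Sum>i\<in>UNIV. \<Sum>k\<in>UNIV. \<Sum>j\<in>UNIV. P$i$k * Y$k$j * Z$i$j)"
    by (rule sum.cong[OF refl], rule sum.swap)
  also have "\<dots> = (\<Sum>k\<in>UNIV. \<Sum>i\<in>UNIV. \<Sum>j\<in>UNIV. P$i$k * Y$k$j * Z$i$j)"
    by (rule sum.swap)
  also have "\<dots> = (\<Sum>k\<in>UNIV. \<Sum>j\<in>UNIV. \<Sum>i\<in>UNIV. P$i$k * Y$k$j * Z$i$j)"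
    by (rule sum.cong[OF refl], rule sum.swap)
  also have "\<dots> = inner Y (transpose P ** Z)"
    by (simp add: inner_vec_def matrix_matrix_mult_def transpose_def sum_distrib_left mult_ac)
  finally show ?thesis .
qed

lemma inner_matmul_right:
  fixes P Y Z :: "real^'n^'n"
  shows "inner (Y ** P) Z = inner Y (Z ** transpose P)"
proof -
  have "inner (Y ** P) Z = (\<Sum>i\<in>UNIV. \<Sum>j\<in>UNIV. \<Sum>k\<in>UNIV. Y$i$k * P$k$j * Z$i$j)"
    by (simp add: inner_vec_def matrix_matrix_mult_def sum_distrib_right)
  also have "\<dots> = (\<Sum>i\<in>UNIV. \<Sum>k\<in>UNIV. \<Sum>j\<in>UNIV. Y$i$k * P$k$j * Z$i$j)"
    by (rule sum.cong[OF refl], rule sum.swap)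
  also have "\<dots> = inner Y (Z ** transpose P)"
    by (simp add: inner_vec_def matrix_matrix_mult_def transpose_def sum_distrib_left mult_ac)
  finally show ?thesis .
qed

lemma norm_orth_mul:
  fixes P Q Y :: "real^'n^'n"
  assumes "orthogonal_matrix P" "orthogonal_matrix Q"
  shows "norm (P ** Y ** Q) = norm Y"
proof -
  have PP: "transpose P ** P = mat 1" and QQ: "Q ** transpose Q = mat 1"
    using assms unfolding orthogonal_matrix_def by auto
  have "inner (P ** Y ** Q) (P ** Y ** Q) = inner (P ** Y) (P ** Y ** Q ** transpose Q)"
    by (rule inner_matmul_right)
  also have "\<dots> = inner (P ** Y) (P ** Y)" by (metis matrix_mul_assoc QQ matrix_mul_rid)
  also have "\<dots> = inner Y (transpose P ** (P ** Y))" by (rule inner_matmul_left)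
  also have "\<dots> = inner Y Y" by (metis matrix_mul_assoc PP matrix_mul_lid)
  finally show ?thesis by (metis norm_eq_sqrt_inner)
qed



lemma mm_diff_left: fixes A B C :: "real^'n^'n" shows "(A - B) ** C = A ** C - B ** C"
  by (simp add: matrix_matrix_mult_def vec_eq_iff algebra_simps sum_subtractf)
lemma mm_diff_right: fixes A B C :: "real^'n^'n" shows "A ** (B - C) = A ** B - A ** C"
  by (simp add: matrix_matrix_mult_def vec_eq_iff algebra_simps sum_subtractf)
lemma mm_add_left: fixes A B C :: "real^'n^'n" shows "(A + B) ** C = A ** C + B ** C"
  by (simp add: matrix_matrix_mult_def vec_eq_iff algebra_simps sum.distrib)
lemma mm_add_right: fixes A B C :: "real^'n^'n" shows "A ** (B + C) = A ** B + A ** C"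
  by (simp add: matrix_matrix_mult_def vec_eq_iff algebra_simps sum.distrib)
lemma mm_scale_left: fixes A B :: "real^'n^'n" shows "(c *\<^sub>R A) ** B = c *\<^sub>R (A ** B)"
  by (simp add: matrix_matrix_mult_def vec_eq_iff algebra_simps sum_distrib_left)
lemma mm_scale_right: fixes A B :: "real^'n^'n" shows "A ** (c *\<^sub>R B) = c *\<^sub>R (A ** B)"
  by (simp add: matrix_matrix_mult_def vec_eq_iff algebra_simps sum_distrib_left)

lemma outer_mult: "outer a b ** outer c d = inner b c *\<^sub>R outer a d"
  by (simp add: outer_def matrix_matrix_mult_def vec_eq_iff inner_vec_def sum_distrib_left
      sum_distrib_right mult_ac)

lemma householder_eq: "householder v = mat 1 - (2 / (norm v)^2) *\<^sub>R outer v v"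
  by (simp add: householder_def outer_def)

lemma transpose_householder: "transpose (householder v) = householder v"
  by (simp add: householder_def transpose_def vec_eq_iff mat_def mult.commute)

lemma householder_orth:
  assumes "v \<noteq> 0"
  shows "orthogonal_matrix (householder v)"
proof -
  let ?c = "2 / (norm v)^2" and ?O = "outer v v"
  have nv: "inner v v = (norm v)^2" by (simp add: power2_norm_eq_inner)
  have pos: "(norm v)^2 > 0" using assms by simp
  have "householder v ** householder v
      = mat 1 - ?c *\<^sub>R ?O - ?c *\<^sub>R ?O + (?c * ?c * inner v v) *\<^sub>R ?O"
    by (simp add: householder_eq mm_diff_left mm_diff_right mm_scale_left mm_scale_right
        outer_mult algebra_simps)
  also have "?c * ?c * inner v v = 2 * ?c" using pos nv by (simp add: field_simps power2_eq_square)
  finally have "householder v ** householder v = mat 1"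
    by (simp add: algebra_simps scaleR_left_distrib[symmetric])
  then show ?thesis by (simp add: orthogonal_matrix transpose_householder)
qed

lemma bb_outer: "bounded_bilinear (outer :: real^'n \<Rightarrow> real^'n \<Rightarrow> real^'n^'n)"
proof (rule bounded_bilinear.intro)
  show "outer (a + a') b = outer a b + outer a' b" for a a' b :: "real^'n"
    by (simp add: outer_def vec_eq_iff algebra_simps)
  show "outer a (b + b') = outer a b + outer a b'" for a b b' :: "real^'n"
    by (simp add: outer_def vec_eq_iff algebra_simps)
  show "outer (r *\<^sub>R a) b = r *\<^sub>R outer a b" for r a b
    by (simp add: outer_def vec_eq_iff algebra_simps)
  show "outer a (r *\<^sub>R b) = r *\<^sub>R outer a b" for r a b
    by (simp add: outer_def vec_eq_iff algebra_simps)
  show "\<exists>K. \<forall>a b. norm (outer a b) \<le> norm a * norm b * K"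
    by (rule exI[of _ 1]) (simp add: norm_outer)
qed

lemma deriv_c:
  fixes v :: "real^'n"
  assumes "v \<noteq> 0"
  shows "((\<lambda>w. 2 / (norm w)^2) has_derivative (\<lambda>h. - (4 * inner v h) / ((norm v)^2)^2)) (at v)"
proof -
  have eq: "(\<lambda>w::real^'n. 2 / (norm w)^2) = (\<lambda>w. 2 / inner w w)"
    by (simp add: power2_norm_eq_inner)
  have nz: "inner v v \<noteq> 0" using assms by simp
  have "((\<lambda>w. 2 / inner w w) has_derivative (\<lambda>h. - (4 * inner v h) / (inner v v)^2)) (at v)"
    using nz by (auto intro!: derivative_eq_intros simp: field_simps power2_eq_square inner_commute)
  then show ?thesis by (simp add: eq power2_norm_eq_inner)
qed



definition dH :: "real^'n \<Rightarrow> real^'n \<Rightarrow> real^'n^'n" where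
  "dH v h = - ((2 / (norm v)^2) *\<^sub>R (outer h v + outer v h)
              + (- (4 * inner v h) / ((norm v)^2)^2) *\<^sub>R outer v v)"

lemma householder_deriv:
  fixes v :: "real^'n"
  assumes "v \<noteq> 0"
  shows "(householder has_derivative dH v) (at v)"
proof -
  have o: "((\<lambda>w. outer w w) has_derivative (\<lambda>h. outer v h + outer h v)) (at v)"
    using bounded_bilinear.FDERIV[OF bb_outer has_derivative_id has_derivative_id] by simp
  have "((\<lambda>w. mat 1 - (2 / (norm w)^2) *\<^sub>R outer w w) has_derivative
        (\<lambda>h. 0 - ((2 / (norm v)^2) *\<^sub>R (outer v h + outer h v)
              + (- (4 * inner v h) / ((norm v)^2)^2) *\<^sub>R outer v v))) (at v)"
    by (intro has_derivative_diff has_derivative_const has_derivative_scaleR deriv_c[OF assms] o)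
  moreover have "(\<lambda>h. 0 - ((2 / (norm v)^2) *\<^sub>R (outer v h + outer h v)
              + (- (4 * inner v h) / ((norm v)^2)^2) *\<^sub>R outer v v)) = dH v"
    by (rule ext) (simp add: dH_def add.commute)
  moreover have "householder = (\<lambda>w::real^'n. mat 1 - (2 / (norm w)^2) *\<^sub>R outer w w)"
    by (rule ext) (rule householder_eq)
  ultimately show ?thesis by simp
qed

lemma dH_bound:
  fixes v :: "real^'n"
  assumes "v \<noteq> 0"
  shows "norm (dH v h) \<le> 8 / norm v * norm h"
proof -
  have nv: "norm v > 0" using assms by simp
  have "norm (dH v h) \<le> norm ((2 / (norm v)^2) *\<^sub>R (outer h v + outer v h))
              + norm ((- (4 * inner v h) / ((norm v)^2)^2) *\<^sub>R outer v v)"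
    unfolding dH_def norm_minus_cancel by (rule norm_triangle_ineq)
  also have "norm ((2 / (norm v)^2) *\<^sub>R (outer h v + outer v h)) \<le> (2 / (norm v)^2) * (2 * norm h * norm v)"
  proof -
    have "norm (outer h v + outer v h) \<le> 2 * norm h * norm v"
      using norm_triangle_ineq[of "outer h v" "outer v h"] by (simp add: norm_outer)
    then have "2 * norm (outer h v + outer v h) \<le> 4 * (norm h * norm v)" by linarith
    then have "2 * norm (outer h v + outer v h) / (norm v)^2 \<le> 4 * (norm h * norm v) / (norm v)^2"
      by (rule divide_right_mono) simp
    then show ?thesis by simp
  qed
  also have "norm ((- (4 * inner v h) / ((norm v)^2)^2) *\<^sub>R outer v v)
       \<le> 4 * (norm v * norm h) / ((norm v)^2)^2 * (norm v * norm v)"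
  proof -
    have "\<bar>inner v h\<bar> \<le> norm v * norm h" by (rule Cauchy_Schwarz_ineq2)
    then have "\<bar>- (4 * inner v h) / ((norm v)^2)^2\<bar> \<le> 4 * (norm v * norm h) / ((norm v)^2)^2"
      using nv by (simp add: abs_mult divide_right_mono)
    then have "\<bar>- (4 * inner v h) / ((norm v)^2)^2\<bar> * (norm v * norm v) \<le> 4 * (norm v * norm h) / ((norm v)^2)^2 * (norm v * norm v)"
      by (rule mult_right_mono) simp
    then show ?thesis by (simp only: norm_scaleR norm_outer real_norm_def)
  qed
  also have "(2 / (norm v)^2) * (2 * norm h * norm v) + 4 * (norm v * norm h) / ((norm v)^2)^2 * (norm v * norm v)
      = 8 / norm v * norm h"
    using nv by (simp add: field_simps power2_eq_square)
  finally show ?thesis by simp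
qed



abbreviation hf :: "(nat \<Rightarrow> real^'n) \<Rightarrow> nat list \<Rightarrow> real^'n^'n" where
  "hf vs xs \<equiv> foldr (\<lambda>l P. householder (vs l) ** P) xs (mat 1)"

lemma foldr_mul: "foldr (\<lambda>l P. householder (vs l) ** P) xs Q = hf vs xs ** Q"
  by (induction xs) (simp_all add: matrix_mul_assoc)

lemma foldr_cong': "(\<And>l. l \<in> set xs \<Longrightarrow> vs l = ws l) \<Longrightarrow> hf vs xs = hf ws xs"
  by (induction xs) simp_all

lemma foldr_orth: "(\<And>l. l \<in> set xs \<Longrightarrow> vs l \<noteq> 0) \<Longrightarrow> orthogonal_matrix (hf vs xs)"
  by (induction xs) (simp_all add: orthogonal_matrix_id orthogonal_matrix_mul householder_orth)

lemma hp_decomp: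
  assumes "l \<in> {1..L}"
  shows "householder_prod L (vs(l := w)) = hf vs [1..<l] ** householder w ** hf vs [Suc l..<L+1]"
proof -
  have split: "[1..<L+1] = [1..<l] @ l # [Suc l..<L+1]"
  proof -
    have "[1..<L+1] = [1..<l] @ [l..<L+1]"
      using assms upt_add_eq_append[of 1 l "L+1-l"] by simp
    also have "[l..<L+1] = l # [Suc l..<L+1]" using assms by (simp add: upt_conv_Cons)
    finally show ?thesis .
  qed
  have "householder_prod L (vs(l := w)) =
      hf (vs(l:=w)) [1..<l] ** (householder w ** hf (vs(l:=w)) [Suc l..<L+1])"
    unfolding householder_prod_def split foldr_append
    by (simp add: foldr_mul[where Q = "foldr _ _ _"] foldr_mul[symmetric])
  also have "hf (vs(l:=w)) [1..<l] = hf vs [1..<l]" by (rule foldr_cong') auto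
  also have "hf (vs(l:=w)) [Suc l..<L+1] = hf vs [Suc l..<L+1]" by (rule foldr_cong') auto
  finally show ?thesis by (simp only: matrix_mul_assoc)
qed



lemma grad_works:
  fixes g :: "'a::euclidean_space \<Rightarrow> real"
  assumes "g differentiable (at X)"
  shows "(g has_derivative (\<lambda>Y. inner Y (grad g X))) (at X)"
proof -
  obtain D' where d: "(g has_derivative D') (at X)" using assms unfolding differentiable_def by blast
  have "linear D'" using d has_derivative_linear by blast
  then obtain D where D: "\<And>h. D' h = inner h D" using gderiv_exists_linear by blast
  have "D' = (\<lambda>h. inner h D)" using D by (intro ext) simp
  then have "GDERIV g X :> D" using d by (simp add: gderiv_def)
  then have "GDERIV g X :> grad g X" unfolding grad_def by (rule someI)
  then show ?thesis by (simp add: gderiv_def)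
qed

lemma linear_sandwich:
  fixes P Q :: "real^'n^'n"
  shows "bounded_linear (\<lambda>Y. P ** Y ** Q)"
proof -
  have "linear (\<lambda>Y. P ** Y ** Q)"
    by (rule linearI) (simp_all add: mm_add_left mm_add_right mm_scale_left mm_scale_right)
  then show ?thesis by (simp add: linear_conv_bounded_linear)
qed

lemma pg_bound:
  fixes g :: "real^'n^'n \<Rightarrow> real" and vs :: "nat \<Rightarrow> real^'n"
  assumes dg: "g differentiable (at (householder_prod L vs))"
    and l: "l \<in> {1..L}" and nz: "\<And>k. k \<in> {1..L} \<Longrightarrow> vs k \<noteq> 0"
  shows "norm (partial_grad_householder g L vs l) \<le> 8 / norm (vs l) * norm (grad g (householder_prod L vs))"
proof -
  let ?X = "householder_prod L vs"
  let ?G = "grad g ?X"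
  define P1 where "P1 = hf vs [1..<l]"
  define P2 where "P2 = hf vs [Suc l..<L+1]"
  have o1: "orthogonal_matrix P1" unfolding P1_def using l by (intro foldr_orth nz) auto
  have o2: "orthogonal_matrix P2" unfolding P2_def using l by (intro foldr_orth nz) auto
  have vnz: "vs l \<noteq> 0" using nz l by blast
  have fun_eq: "(\<lambda>w. g (householder_prod L (vs(l := w)))) = (\<lambda>w. g (P1 ** householder w ** P2))"
    unfolding P1_def P2_def by (intro ext) (simp only: hp_decomp[OF l])
  have Xeq: "P1 ** householder (vs l) ** P2 = ?X"
    using hp_decomp[OF l, of vs "vs l"] unfolding P1_def P2_def by simp
  have d1: "((\<lambda>w. P1 ** householder w ** P2) has_derivative (\<lambda>h. P1 ** dH (vs l) h ** P2)) (at (vs l))"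
    using bounded_linear.has_derivative[OF linear_sandwich householder_deriv[OF vnz]] .
  have dg': "(g has_derivative (\<lambda>Y. inner Y ?G)) (at (P1 ** householder (vs l) ** P2))"
    using grad_works[OF dg] Xeq by simp
  have d: "((\<lambda>w. g (P1 ** householder w ** P2)) has_derivative (\<lambda>h. inner (P1 ** dH (vs l) h ** P2) ?G)) (at (vs l))"
    using has_derivative_compose[OF d1 dg'] .
  have K: "\<bar>inner (P1 ** dH (vs l) h ** P2) ?G\<bar> \<le> (8 / norm (vs l) * norm ?G) * norm h" for h
  proof -
    have "\<bar>inner (P1 ** dH (vs l) h ** P2) ?G\<bar> \<le> norm (P1 ** dH (vs l) h ** P2) * norm ?G"
      by (rule Cauchy_Schwarz_ineq2)
    also have "\<dots> = norm (dH (vs l) h) * norm ?G" using norm_orth_mul[OF o1 o2] by simp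
    also have "\<dots> \<le> (8 / norm (vs l) * norm h) * norm ?G"
      by (rule mult_right_mono[OF dH_bound[OF vnz]]) simp
    finally show ?thesis by (simp add: mult_ac)
  qed
  show ?thesis
    unfolding partial_grad_householder_def fun_eq
    by (rule grad_norm_bound[OF d K])
qed



lemma nn_integral_cmult_le:
  fixes c :: ennreal
  assumes c0: "c \<noteq> 0" and ct: "c \<noteq> top"
  shows "(\<integral>\<^sup>+x. c * g x \<partial>M) \<le> c * integral\<^sup>N M g"
  unfolding nn_integral_def[of M "\<lambda>x. c * g x"]
proof (rule SUP_least)
  fix s assume "s \<in> {s. simple_function M s \<and> s \<le> (\<lambda>x. c * g x)}"
  then have sf: "simple_function M s" and sle: "\<And>x. s x \<le> c * g x" by (auto simp: le_fun_def)
  let ?s = "\<lambda>x. s x / c"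
  have cancel: "c * (y / c) = y" for y :: ennreal
      proof -
    have "c * (y / c) = y * c / c" by (simp add: ennreal_times_divide mult.commute)
    also have "\<dots> = y" using c0 ct by (rule mult_divide_eq_ennreal)
    finally show ?thesis .
  qed
  have sf': "simple_function M ?s" using sf by (rule simple_function_compose1)
  have le': "?s \<le> g"
  proof (rule le_funI)
    fix x show "s x / c \<le> g x"
    proof -
      have "c * (s x / c) \<le> c * g x" using sle[of x] by (simp only: cancel)
      then show ?thesis using ennreal_mult_le_mult_iff[OF c0 ct] by blast
    qed
  qed
  have "integral\<^sup>S M s = integral\<^sup>S M (\<lambda>x. c * ?s x)" by (simp add: cancel)
  also have "\<dots> = c * integral\<^sup>S M ?s" using sf' by (rule simple_integral_mult)
  also have "\<dots> \<le> c * integral\<^sup>N M g"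
    unfolding nn_integral_def
    by (intro mult_left_mono SUP_upper) (use sf' le' in auto)
  finally show "integral\<^sup>S M s \<le> c * integral\<^sup>N M g" .
qed

theorem mainTheorem8:
  fixes M :: "'w measure"
    and f :: "'w \<Rightarrow> real^'n^'n \<Rightarrow> real"
    and A M2 :: real and L :: nat
    and v :: "nat \<Rightarrow> real^'n"
  assumes "prob_space M"
    and "A > 0"
    and "\<And>X. (\<lambda>\<omega>. f \<omega> X) \<in> borel_measurable M"
    and "\<And>\<omega> X. \<omega> \<in> space M \<Longrightarrow> f \<omega> differentiable (at X)"
    and "\<And>X. orthogonal_matrix X \<Longrightarrow>
           (\<integral>\<^sup>+ \<omega>. ennreal ((norm (grad (f \<omega>) X))^2) \<partial>M) \<le> ennreal M2"
    and "\<And>l. l \<in> {1..L} \<Longrightarrow> norm (v l) > A"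
  shows "(\<integral>\<^sup>+ \<omega>. ennreal (\<Sum>l=1..L. (norm (partial_grad_householder (f \<omega>) L v l))^2) \<partial>M)
         \<le> ennreal (24 / A^2 * real (CARD('n)) * (real (CARD('n)) + 2) * real L * M2)"
proof (cases "L = 0")
  case True
  then show ?thesis by simp
next
  case False
  let ?X = "householder_prod L v"
  let ?N = "real (CARD('n))"
  have Apos: "A > 0" by fact
  have vA: "\<And>l. l \<in> {1..L} \<Longrightarrow> norm (v l) > A" by fact
  have nz: "\<And>l. l \<in> {1..L} \<Longrightarrow> v l \<noteq> 0" using vA Apos
    by (metis norm_zero order.asym)
  have orthX: "orthogonal_matrix ?X" unfolding householder_prod_def
    by (rule foldr_orth, rule nz) auto
  define c where "c = 64 * real L / A^2"
  have cpos: "c > 0" using False Apos unfolding c_def by simp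
  have pw: "(\<Sum>l=1..L. (norm (partial_grad_householder (f \<omega>) L v l))^2)
      \<le> c * (norm (grad (f \<omega>) ?X))^2" if \<omega>: "\<omega> \<in> space M" for \<omega>
  proof -
    let ?G = "norm (grad (f \<omega>) ?X)"
    have each: "(norm (partial_grad_householder (f \<omega>) L v l))^2 \<le> 64 / A^2 * ?G^2"
      if l: "l \<in> {1..L}" for l
    proof -
      have b: "norm (partial_grad_householder (f \<omega>) L v l) \<le> 8 / norm (v l) * ?G"
        by (rule pg_bound[OF assms(4)[OF \<omega>] l nz])
      have "8 / norm (v l) \<le> 8 / A" using vA[OF l] Apos by (simp add: frac_le)
      then have "8 / norm (v l) * ?G \<le> 8 / A * ?G" by (rule mult_right_mono) simp
      with b have "norm (partial_grad_householder (f \<omega>) L v l) \<le> 8 / A * ?G" by linarith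
      then have "(norm (partial_grad_householder (f \<omega>) L v l))^2 \<le> (8 / A * ?G)^2"
        by (simp add: power_mono)
      also have "\<dots> = 64 / A^2 * ?G^2" by (simp add: power_mult_distrib power_divide)
      finally show ?thesis .
    qed
    have "(\<Sum>l=1..L. (norm (partial_grad_householder (f \<omega>) L v l))^2) \<le> (\<Sum>l=1..L. 64 / A^2 * ?G^2)"
      by (rule sum_mono) (rule each, simp)
    also have "\<dots> = c * ?G^2" by (simp add: c_def)
    finally show ?thesis .
  qed
  have "(\<integral>\<^sup>+ \<omega>. ennreal (\<Sum>l=1..L. (norm (partial_grad_householder (f \<omega>) L v l))^2) \<partial>M)
      \<le> (\<integral>\<^sup>+ \<omega>. ennreal c * ennreal ((norm (grad (f \<omega>) ?X))^2) \<partial>M)"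
  proof (rule nn_integral_mono)
    fix \<omega> assume \<omega>: "\<omega> \<in> space M"
    have "ennreal (\<Sum>l=1..L. (norm (partial_grad_householder (f \<omega>) L v l))^2)
        \<le> ennreal (c * (norm (grad (f \<omega>) ?X))^2)" by (rule ennreal_leI, rule pw[OF \<omega>])
    also have "\<dots> = ennreal c * ennreal ((norm (grad (f \<omega>) ?X))^2)"
      by (rule ennreal_mult) (use cpos in auto)
    finally show "ennreal (\<Sum>l=1..L. (norm (partial_grad_householder (f \<omega>) L v l))^2)
        \<le> ennreal c * ennreal ((norm (grad (f \<omega>) ?X))^2)" .
  qed
  also have "\<dots> \<le> ennreal c * (\<integral>\<^sup>+ \<omega>. ennreal ((norm (grad (f \<omega>) ?X))^2) \<partial>M)"
    by (rule nn_integral_cmult_le) (use cpos in auto)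
  also have "\<dots> \<le> ennreal c * ennreal M2"
    by (rule mult_left_mono[OF assms(5)[OF orthX]]) simp
  also have "\<dots> \<le> ennreal (24 / A^2 * ?N * (?N + 2) * real L) * ennreal M2"
  proof (rule mult_right_mono)
    have N1: "?N \<ge> 1" by simp
    have N3: "?N + 2 \<ge> 3" using N1 by linarith
    have "?N * (?N + 2) \<ge> 1 * 3" by (rule mult_mono[OF N1 N3]) auto
    then have "64 \<le> 24 * (?N * (?N + 2))" by linarith
    then have "64 * real L / A^2 \<le> 24 * (?N * (?N + 2)) * real L / A^2"
      by (intro divide_right_mono mult_right_mono) auto
    then show "ennreal c \<le> ennreal (24 / A^2 * ?N * (?N + 2) * real L)"
      unfolding c_def by (intro ennreal_leI) (simp add: field_simps)
  qed simp
  also have "\<dots> = ennreal (24 / A^2 * ?N * (?N + 2) * real L * M2)"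
    by (rule ennreal_mult'[symmetric]) simp
  finally show ?thesis .
qed

end
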